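(* Let $V$ be a finite-dimensional complex $S_d$-module, and transport the $\mathrm{GL}(\mathbb{E})$-action on $(V\otimes\mathbb{E}^{\otimes d})^{S_d}$ to $\bigoplus_{\underline{d}\in\mathcal{P}_{n,d}}V^{S_{\underline{d}}}$ via the isomorphism $\Phi$ described in the context. Let $\underline{d}=(d_1,\dots,d_n)\in\mathcal{P}_{n,d}$ and $a\in[n-1]$. If $d_{a+1}\ge1$, then the Chevalley generator $E_a$ maps $V^{S_{\underline{d}}}$ to $V^{S_{\tilde e_a\underline{d}}}$ by $$v\mapsto d_{a+1}\cdot\frac{1}{\#S_{\tilde e_a\underline{d}}}\sum_{w\in S_{\tilde e_a\underline{d}}}w(v).$$ If $d_a\ge1$, then $F_a$ maps $V^{S_{\underline{d}}}$ to $V^{S_{\tilde f_a\underline{d}}}$ by $$v\mapsto d_a\cdot\frac{1}{\#S_{\tilde f_a\underline{d}}}\sum_{w\in S_{\tilde f_a\underline{d}}}w(v).$$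
   Context: Fix integers $n,d\ge1$. Let $\mathcal{P}_{n,d}$ be the set of compositions $\underline{d}=(d_1,\dots,d_n)$, $d_i\ge0$, $\sum d_i=d$. Let $S_{\underline{d}}=S_{d_1}\times\dots\times S_{d_n}\subseteq S_d$ be the subgroup preserving each block $\{d_1+\dots+d_{i-1}+1,\dots,d_1+\dots+d_i\}$. Let $\mathbb{E}=\mathbb{C}^n$ with basis $\theta_1,\dots,\theta_n$, and set $\theta_{\underline{d}}=\theta_1^{\otimes d_1}\otimes\dots\otimes\theta_n^{\otimes d_n}\in\mathbb{E}^{\otimes d}$. The group $S_d$ acts on $V\otimes\mathbb{E}^{\otimes d}$ diagonally, permuting tensor factors on $\mathbb{E}^{\otimes d}$, and $\mathrm{GL}(\mathbb{E})$ acts on $\mathbb{E}^{\otimes d}$; these actions commute. The isomorphism $\Phi:\bigoplus_{\underline{d}}V^{S_{\underline{d}}}\xrightarrow{\sim}(V\otimes\mathbb{E}^{\otimes d})^{S_d}$ sends $v\in V^{S_{\underline{d}}}$ to $\frac{1}{\#S_d}\sum_{x\in S_d}x(v)\otimes x(\theta_{\underline{d}})$. It identifies $V^{S_{\underline{d}}}$ with the $\underline{d}$-weight space, using the trivialization of the line spanned by $\theta_{\underline{d}}$. The Chevalley generators are $E_a\theta_{a+1}=\theta_a$, $E_a\theta_i=0$ for $i\ne a+1$, and $F_a\theta_a=\theta_{a+1}$, $F_a\theta_i=0$ for $i\ne a$. The composition $\tilde e_a\underline{d}$ replaces $(d_a,d_{a+1})$ by $(d_a+1,d_{a+1}-1)$,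 and $\tilde f_a\underline{d}$ replaces $(d_a,d_{a+1})$ by $(d_a-1,d_{a+1}+1)$. *)

theory Defs
  imports "HOL-Analysis.Analysis"
begin

text \<open>Conventions (0-based): positions of tensor factors are 0..d-1, basis vectors of E
  are theta_0..theta_{n-1}.  V is modelled as complex^'m (a finite-dimensional complex space,
  any such is isomorphic to one of these) with representation rho given by matrices.\<close>

definition compositions :: "nat \<Rightarrow> nat \<Rightarrow> (nat \<Rightarrow> nat) set" where
  "compositions n d = {c. (\<forall>i\<ge>n. c i = 0) \<and> (\<Sum>i<n. c i) = d}"

definition block :: "(nat \<Rightarrow> nat) \<Rightarrow> nat \<Rightarrow> nat set" where
  "block c i = {(\<Sum>k<i. c k) ..< (\<Sum>k<Suc i. c k)}"

definition Sym :: "nat \<Rightarrow> (nat \<Rightarrow> nat) set" where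
  "Sym d = {x. x permutes {..<d}}"

definition young :: "nat \<Rightarrow> nat \<Rightarrow> (nat \<Rightarrow> nat) \<Rightarrow> (nat \<Rightarrow> nat) set" where
  "young n d c = {x. x permutes {..<d} \<and> (\<forall>i<n. x ` block c i = block c i)}"

definition etil :: "nat \<Rightarrow> (nat \<Rightarrow> nat) \<Rightarrow> (nat \<Rightarrow> nat)" where
  "etil a c = c(a := c a + 1, Suc a := c (Suc a) - 1)"

definition ftil :: "nat \<Rightarrow> (nat \<Rightarrow> nat) \<Rightarrow> (nat \<Rightarrow> nat)" where
  "ftil a c = c(a := c a - 1, Suc a := c (Suc a) + 1)"

text \<open>Basis of E^{\<otimes>d}: words u : {..<d} -> {..<n}, extended by 0 outside {..<d}.
  The word of theta_c = theta_0^{c_0} ... theta_{n-1}^{c_{n-1}}.\<close>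
definition thetaw :: "nat \<Rightarrow> (nat \<Rightarrow> nat) \<Rightarrow> nat \<Rightarrow> nat" where
  "thetaw d c j = (if j < d then (LEAST i. j \<in> block c i) else 0)"

text \<open>Elements of V \<otimes> E^{\<otimes>d} are coefficient functions words => V.
  A permutation x sends theta_{u} to theta_{u o x^{-1}} (factor at position j moves to x j).\<close>
type_synonym 'm tens = "(nat \<Rightarrow> nat) \<Rightarrow> complex ^ 'm::finite"

text \<open>Phi on a single summand V^{S_c}: v |-> 1/#S_d sum_x x(v) \<otimes> x(theta_c).\<close>
definition Phi_c :: "nat \<Rightarrow> ((nat \<Rightarrow> nat) \<Rightarrow> complex ^ 'm::finite ^ 'm) \<Rightarrow> (nat \<Rightarrow> nat)
    \<Rightarrow> complex ^ 'm::finite \<Rightarrow> ('m::finite) tens" where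
  "Phi_c d rho c v = (\<lambda>u. (1 / of_nat (card (Sym d))) *s
      (\<Sum>x\<in>Sym d. if thetaw d c \<circ> inv x = u then rho x *v v else 0))"

definition Phi :: "nat \<Rightarrow> nat \<Rightarrow> ((nat \<Rightarrow> nat) \<Rightarrow> complex ^ 'm::finite ^ 'm)
    \<Rightarrow> ((nat \<Rightarrow> nat) \<Rightarrow> complex ^ 'm::finite) \<Rightarrow> ('m::finite) tens" where
  "Phi n d rho f = (\<lambda>u. \<Sum>c\<in>compositions n d. Phi_c d rho c (f c) u)"

text \<open>Chevalley generators of gl(E) acting on V \<otimes> E^{\<otimes>d} (trivially on V, as a derivation on
  the tensor power): E_a theta_{a+1} = theta_a, F_a theta_a = theta_{a+1}.\<close>
definition Eop :: "nat \<Rightarrow> nat \<Rightarrow> ('m::finite) tens \<Rightarrow> ('m::finite) tens" where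
  "Eop d a T = (\<lambda>u. \<Sum>j\<in>{j. j < d \<and> u j = a}. T (u(j := Suc a)))"

definition Fop :: "nat \<Rightarrow> nat \<Rightarrow> ('m::finite) tens \<Rightarrow> ('m::finite) tens" where
  "Fop d a T = (\<lambda>u. \<Sum>j\<in>{j. j < d \<and> u j = Suc a}. T (u(j := a)))"

definition invariants :: "((nat \<Rightarrow> nat) \<Rightarrow> complex ^ 'm::finite ^ 'm) \<Rightarrow> (nat \<Rightarrow> nat) set
    \<Rightarrow> (complex ^ 'm::finite) set" where
  "invariants rho G = {v. \<forall>x\<in>G. rho x *v v = v}"

definition is_Sd_rep :: "nat \<Rightarrow> ((nat \<Rightarrow> nat) \<Rightarrow> complex ^ 'm::finite ^ 'm) \<Rightarrow> bool" where
  "is_Sd_rep d rho \<longleftrightarrow> rho id = mat 1 \<and>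
     (\<forall>x\<in>Sym d. \<forall>y\<in>Sym d. rho (x \<circ> y) = rho x ** rho y)"

definition single :: "(nat \<Rightarrow> nat) \<Rightarrow> complex ^ 'm::finite \<Rightarrow> (nat \<Rightarrow> nat) \<Rightarrow> complex ^ 'm::finite" where
  "single c v = (\<lambda>c'. if c' = c then v else 0)"

end

theory Submission
  imports Defs
begin

lemma mv_smult: "A *v (k *s x) = k *s (A *v (x::complex^'n))"
  by (simp add: vec_eq_iff matrix_vector_mult_def sum_distrib_left algebra_simps)

lemma mv_sum: "A *v (\<Sum>i\<in>I. f i) = (\<Sum>i\<in>I. A *v (f i :: complex^'n))"
proof (cases "finite I")
  case True then show ?thesis by (induction I rule: finite_induct) (simp_all add: matrix_vector_right_distrib)
qed simp

lemma smult_sum: "k *s (\<Sum>i\<in>I. f i) = (\<Sum>i\<in>I. k *s (f i :: complex^'n))"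
  by (simp add: vec_eq_iff sum_distrib_left)

lemma sum_const_vec: "(\<Sum>i\<in>I. (x::complex^'n)) = (of_nat (card I)::complex) *s x"
  unfolding vec_eq_iff sum_component by simp

lemma sum_if_smult: "(\<Sum>i\<in>I. if P i then k *s f i else 0) = k *s (\<Sum>i\<in>I. if P i then f i else (0::complex^'n))"
  unfolding vec_eq_iff by (auto simp add: sum_distrib_left intro!: sum.cong)

definition XS :: "nat \<Rightarrow> ((nat \<Rightarrow> nat) \<Rightarrow> complex ^ 'm::finite ^ 'm) \<Rightarrow> (nat \<Rightarrow> nat) \<Rightarrow> (nat \<Rightarrow> nat) \<Rightarrow> complex ^ 'm \<Rightarrow> complex ^ 'm" where
  "XS d rho th u v = (\<Sum>x\<in>Sym d. if th \<circ> inv x = u then rho x *v v else 0)"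

lemma finite_Sym: "finite (Sym d)"
  unfolding Sym_def by (rule finite_permutations) simp

lemma Sym_bij: "x \<in> Sym d \<Longrightarrow> bij x"
  unfolding Sym_def using permutes_bij by blast

lemma Sym_comp: "x \<in> Sym d \<Longrightarrow> y \<in> Sym d \<Longrightarrow> x \<circ> y \<in> Sym d"
  unfolding Sym_def by (simp add: permutes_compose)

lemma Sym_inv: "x \<in> Sym d \<Longrightarrow> inv x \<in> Sym d"
  unfolding Sym_def by (simp add: permutes_inv)

lemma Sym_inv_r: "x \<in> Sym d \<Longrightarrow> x \<circ> inv x = id"
  unfolding Sym_def by (simp add: permutes_inv_o)

lemma Sym_inv_l: "x \<in> Sym d \<Longrightarrow> inv x \<circ> x = id"
  unfolding Sym_def by (simp add: permutes_inv_o)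

lemma reindex_stab:
  assumes rep: "\<forall>x\<in>Sym d. \<forall>y\<in>Sym d. rho (x \<circ> y) = rho x ** rho y"
    and w: "w \<in> Sym d" and th: "th \<circ> w = th"
  shows "XS d rho th u (rho w *v v) = XS d rho th u v"
proof -
  have thi: "th \<circ> inv w = th"
    by (metis th w Sym_inv_r comp_id o_assoc)
  have "XS d rho th u (rho w *v v) = (\<Sum>x\<in>Sym d. if th \<circ> inv x = u then rho (x \<circ> w) *v v else 0)"
    unfolding XS_def using rep w by (intro sum.cong) (auto simp: matrix_vector_mul_assoc)
  also have "\<dots> = XS d rho th u v"
    unfolding XS_def
  proof (rule sum.reindex_bij_witness[where i="\<lambda>x. x \<circ> inv w" and j="\<lambda>x. x \<circ> w"])
    fix x assume x: "x \<in> Sym d"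
    show "x \<circ> w \<circ> inv w = x" using w by (simp add: o_assoc[symmetric] Sym_inv_r)
    show "x \<circ> w \<in> Sym d" using x w by (rule Sym_comp)
    show "x \<circ> inv w \<circ> w = x" using w by (simp add: o_assoc[symmetric] Sym_inv_l)
    show "x \<circ> inv w \<in> Sym d" using x w by (simp add: Sym_comp Sym_inv)
    have "inv (x \<circ> w) = inv w \<circ> inv x" using x w by (simp add: o_inv_distrib Sym_bij)
    then have "th \<circ> inv (x \<circ> w) = th \<circ> inv x" using thi by (simp add: o_assoc)
    then show "(if th \<circ> inv (x \<circ> w) = u then rho (x \<circ> w) *v v else 0) =
          (if th \<circ> inv x = u then rho (x \<circ> w) *v v else 0)" by simp
  qed
  finally show ?thesis .
qed

lemma upd_iff: "f k = b \<Longrightarrow> (f(k := a) = u) \<longleftrightarrow> (u k = a \<and> f = u(k := b))"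
  by (auto simp: fun_eq_iff)

lemma cond_iff:
  assumes x: "x \<in> Sym d" and thp: "th p = \<beta>"
  shows "(th(p := \<alpha>) \<circ> inv x = u) \<longleftrightarrow> (u (x p) = \<alpha> \<and> th \<circ> inv x = u(x p := \<beta>))"
proof -
  have b: "bij x" using x by (rule Sym_bij)
  have "th(p := \<alpha>) \<circ> inv x = (th \<circ> inv x)(x p := \<alpha>)"
  proof
    fix y
    have "inv x y = p \<longleftrightarrow> y = x p" using b by (metis bij_inv_eq_iff)
    then show "(th(p := \<alpha>) \<circ> inv x) y = ((th \<circ> inv x)(x p := \<alpha>)) y" by auto
  qed
  moreover have "(th \<circ> inv x) (x p) = \<beta>" using b thp by (simp add: bij_is_inj)
  ultimately show ?thesis using upd_iff by metis
qed

lemma Sym_permutes: "x \<in> Sym d \<Longrightarrow> x permutes {..<d}"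
  unfolding Sym_def by simp

lemma core:
  assumes rep: "\<forall>x\<in>Sym d. \<forall>y\<in>Sym d. rho (x \<circ> y) = rho x ** rho y"
    and p: "p < d" and thp: "th p = \<beta>"
    and vinv: "\<forall>q<d. th q = \<beta> \<longrightarrow> rho (Transposition.transpose p q) *v v = v"
  shows "(\<Sum>j\<in>{j. j < d \<and> u j = \<alpha>}. XS d rho th (u(j := \<beta>)) v)
       = (of_nat (card {q. q < d \<and> th q = \<beta>})::complex) *s XS d rho (th(p := \<alpha>)) u v"
proof -
  define B where "B = {q. q < d \<and> th q = \<beta>}"
  define C where "C = (\<lambda>q x. u (x q) = \<alpha> \<and> th \<circ> inv x = u(x q := \<beta>))"
  define Y where "Y = (\<lambda>q. \<Sum>x\<in>Sym d. if C q x then rho x *v v else 0)"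
  have finB: "finite B" unfolding B_def by simp
  have Yq: "XS d rho (th(p := \<alpha>)) u v = Y q" if q: "q \<in> B" for q
  proof -
    define \<tau> where "\<tau> = Transposition.transpose p q"
    have qd: "q < d" and thq: "th q = \<beta>" using q by (auto simp: B_def)
    have tS: "\<tau> \<in> Sym d" unfolding \<tau>_def Sym_def using p qd by (intro CollectI permutes_swap_id) auto
    have tt: "\<tau> \<circ> \<tau> = id" unfolding \<tau>_def by simp
    have tht: "th \<circ> \<tau> = th" unfolding \<tau>_def using thp thq by (auto simp: fun_eq_iff Transposition.transpose_def)
    have "XS d rho (th(p := \<alpha>)) u v = XS d rho (th(p := \<alpha>)) u (rho \<tau> *v v)"
      using vinv qd thq by (simp add: \<tau>_def)
    also have "\<dots> = (\<Sum>x\<in>Sym d. if th(p := \<alpha>) \<circ> inv x = u then rho (x \<circ> \<tau>) *v v else 0)"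
      unfolding XS_def using rep tS by (intro sum.cong) (auto simp: matrix_vector_mul_assoc)
    also have "\<dots> = Y q"
      unfolding Y_def
    proof (rule sum.reindex_bij_witness[where i="\<lambda>x. x \<circ> \<tau>" and j="\<lambda>x. x \<circ> \<tau>"])
      fix x assume x: "x \<in> Sym d"
      show "x \<circ> \<tau> \<circ> \<tau> = x" by (simp add: o_assoc[symmetric] tt)
      show "x \<circ> \<tau> \<in> Sym d" using x tS by (rule Sym_comp)
      then show "x \<circ> \<tau> \<in> Sym d" .
      show "x \<circ> \<tau> \<circ> \<tau> = x" by (simp add: o_assoc[symmetric] tt)
      have inv: "inv (x \<circ> \<tau>) = \<tau> \<circ> inv x" using x tS by (simp add: o_inv_distrib Sym_bij \<tau>_def)
      have "C q (x \<circ> \<tau>) \<longleftrightarrow> (u (x p) = \<alpha> \<and> th \<circ> inv x = u(x p := \<beta>))"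
        unfolding C_def inv o_assoc using tht by (simp add: \<tau>_def)
      also have "\<dots> \<longleftrightarrow> th(p := \<alpha>) \<circ> inv x = u" using cond_iff[of x d th p \<beta> \<alpha> u] x thp by simp
      finally show "(if C q (x \<circ> \<tau>) then rho (x \<circ> \<tau>) *v v else 0) =
          (if th(p := \<alpha>) \<circ> inv x = u then rho (x \<circ> \<tau>) *v v else 0)" by simp
    qed
    finally show ?thesis .
  qed
  have "(\<Sum>j\<in>{j. j < d \<and> u j = \<alpha>}. XS d rho th (u(j := \<beta>)) v)
      = (\<Sum>x\<in>Sym d. \<Sum>j\<in>{j. j < d \<and> u j = \<alpha>}. if th \<circ> inv x = u(j := \<beta>) then rho x *v v else 0)"
    unfolding XS_def by (rule sum.swap)
  also have "\<dots> = (\<Sum>x\<in>Sym d. \<Sum>q\<in>B. if C q x then rho x *v v else 0)"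
  proof (rule sum.cong[OF refl])
    fix x assume x: "x \<in> Sym d"
    have xp: "x permutes {..<d}" using x by (rule Sym_permutes)
    have "(\<Sum>j\<in>{j. j < d \<and> u j = \<alpha>}. if th \<circ> inv x = u(j := \<beta>) then rho x *v v else 0)
        = (\<Sum>j\<in>{..<d}. if u j = \<alpha> \<and> th \<circ> inv x = u(j := \<beta>) then rho x *v v else 0)"
      by (rule sum.mono_neutral_cong_left) auto
    also have "\<dots> = (\<Sum>j\<in>x ` {..<d}. if u j = \<alpha> \<and> th \<circ> inv x = u(j := \<beta>) then rho x *v v else 0)"
      using permutes_image[OF xp] by simp
    also have "\<dots> = (\<Sum>q\<in>{..<d}. if C q x then rho x *v v else 0)"
      unfolding C_def using permutes_inj[OF xp] by (subst sum.reindex) (auto intro: inj_on_subset)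
    also have "\<dots> = (\<Sum>q\<in>B. if C q x then rho x *v v else 0)"
    proof (rule sum.mono_neutral_right)
      show "\<forall>i\<in>{..<d} - B. (if C i x then rho x *v v else 0) = 0"
      proof
        fix q assume q: "q \<in> {..<d} - B"
        have "\<not> C q x"
        proof
          assume "C q x"
          then have "(th \<circ> inv x) (x q) = \<beta>" unfolding C_def by simp
          then have "th q = \<beta>" using permutes_inverses(2)[OF xp] by simp
          then show False using q by (auto simp: B_def)
        qed
        then show "(if C q x then rho x *v v else 0) = 0" by simp
      qed
    qed (auto simp: B_def)
    finally show "(\<Sum>j\<in>{j. j < d \<and> u j = \<alpha>}. if th \<circ> inv x = u(j := \<beta>) then rho x *v v else 0)
        = (\<Sum>q\<in>B. if C q x then rho x *v v else 0)" .
  qed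
  also have "\<dots> = (\<Sum>q\<in>B. Y q)" unfolding Y_def by (rule sum.swap)
  also have "\<dots> = (\<Sum>q\<in>B. XS d rho (th(p := \<alpha>)) u v)" using Yq by simp
  also have "\<dots> = (of_nat (card B)::complex) *s XS d rho (th(p := \<alpha>)) u v" by (rule sum_const_vec)
  finally show ?thesis unfolding B_def .
qed

definition psum :: "(nat \<Rightarrow> nat) \<Rightarrow> nat \<Rightarrow> nat" where
  "psum c i = (\<Sum>k<i. c k)"

lemma block_psum: "block c i = {psum c i ..< psum c (Suc i)}"
  unfolding block_def psum_def by simp

lemma psum_Suc: "psum c (Suc i) = psum c i + c i"
  unfolding psum_def by simp

lemma psum_mono: "i \<le> j \<Longrightarrow> psum c i \<le> psum c j"
  unfolding psum_def by (rule sum_mono2) auto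

lemma psum_comp: "c \<in> compositions n d \<Longrightarrow> psum c n = d"
  unfolding psum_def compositions_def by simp

lemma theta_eq:
  assumes "psum c i \<le> j" "j < psum c (Suc i)" "j < d"
  shows "thetaw d c j = i"
proof -
  have "(LEAST i. j \<in> block c i) = i"
  proof (rule Least_equality)
    show "j \<in> block c i" using assms by (simp add: block_psum)
    fix i' assume "j \<in> block c i'"
    then have "psum c i' \<le> j" "j < psum c (Suc i')" by (auto simp: block_psum)
    show "i \<le> i'"
    proof (rule ccontr)
      assume "\<not> i \<le> i'"
      then have "psum c (Suc i') \<le> psum c i" by (intro psum_mono) simp
      then show False using \<open>j < psum c (Suc i')\<close> assms(1) by simp
    qed
  qed
  then show ?thesis using assms(3) by (simp add: thetaw_def)
qed

lemma theta_ex: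
  assumes c: "c \<in> compositions n d" and j: "j < d"
  shows "thetaw d c j < n \<and> psum c (thetaw d c j) \<le> j \<and> j < psum c (Suc (thetaw d c j))"
proof -
  have n0: "n \<noteq> 0" using psum_comp[OF c] j by (auto simp: psum_def intro: Nat.gr0I)
  define i where "i = (LEAST i. j < psum c (Suc i))"
  have ex: "j < psum c (Suc (n - 1))" using n0 psum_comp[OF c] j by simp
  have i1: "j < psum c (Suc i)" unfolding i_def by (rule LeastI[of _ "n - 1"]) (rule ex)
  have "i \<le> n - 1" unfolding i_def by (rule Least_le) (rule ex)
  then have i2: "i < n" using n0 by simp
  have i3: "psum c i \<le> j"
  proof (cases i)
    case 0 then show ?thesis by (simp add: psum_def)
  next
    case (Suc i')
    have "\<not> j < psum c (Suc i')" using Suc unfolding i_def by (metis lessI not_less_Least)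
    then show ?thesis using Suc by simp
  qed
  have "thetaw d c j = i" using theta_eq[OF i3 i1 j] .
  then show ?thesis using i1 i2 i3 by simp
qed

lemma theta_block:
  assumes c: "c \<in> compositions n d" and j: "j < d"
  shows "thetaw d c j = i \<longleftrightarrow> j \<in> block c i"
  using theta_ex[OF c j] theta_eq[of c i j d] j by (auto simp: block_psum)

lemma theta_lt:
  assumes c: "c \<in> compositions n d" and j: "j < d"
  shows "thetaw d c j < n"
  using theta_ex[OF c j] by simp

lemma block_sub:
  assumes c: "c \<in> compositions n d" and i: "i < n"
  shows "block c i \<subseteq> {..<d}"
proof -
  have "psum c (Suc i) \<le> psum c n" using i by (intro psum_mono) simp
  then show ?thesis using psum_comp[OF c] by (auto simp: block_psum)
qed

lemma fiber_block:
  assumes c: "c \<in> compositions n d" and i: "i < n"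
  shows "{q. q < d \<and> thetaw d c q = i} = block c i"
  using theta_block[OF c] block_sub[OF c i] by auto

lemma card_fiber:
  assumes c: "c \<in> compositions n d" and i: "i < n"
  shows "card {q. q < d \<and> thetaw d c q = i} = c i"
  unfolding fiber_block[OF c i] block_psum by (simp add: psum_Suc)

lemma young_Sym: "w \<in> young n d c \<Longrightarrow> w \<in> Sym d"
  unfolding young_def Sym_def by simp

lemma young_stab:
  assumes c: "c \<in> compositions n d" and w: "w \<in> young n d c"
  shows "thetaw d c \<circ> w = thetaw d c"
proof
  fix j
  have wp: "w permutes {..<d}" and wb: "\<forall>i<n. w ` block c i = block c i" using w by (auto simp: young_def)
  show "(thetaw d c \<circ> w) j = thetaw d c j"
  proof (cases "j < d")
    case True
    define i where "i = thetaw d c j"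
    have i: "i < n" "j \<in> block c i" using theta_lt[OF c True] theta_block[OF c True] by (auto simp: i_def)
    have "w j \<in> block c i" using wb i by blast
    moreover have "w j < d" using permutes_in_image[OF wp] True by simp
    ultimately have "thetaw d c (w j) = i" using theta_block[OF c] by blast
    then show ?thesis by (simp add: i_def)
  next
    case False
    then have "w j = j" using permutes_not_in[OF wp] by simp
    then show ?thesis by simp
  qed
qed

lemma transp_young:
  assumes c: "c \<in> compositions n d" and i: "i < n" and p: "p \<in> block c i" and q: "q \<in> block c i"
  shows "Transposition.transpose p q \<in> young n d c"
proof -
  have pd: "p < d" and qd: "q < d" using block_sub[OF c i] p q by auto
  have "Transposition.transpose p q permutes {..<d}" using pd qd by (intro permutes_swap_id) auto
  moreover have "Transposition.transpose p q ` block c k = block c k" if k: "k < n" for k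
  proof (rule transpose_image_eq)
    have "p \<in> block c k \<longleftrightarrow> k = i" using theta_block[OF c pd] p by metis
    moreover have "q \<in> block c k \<longleftrightarrow> k = i" using theta_block[OF c qd] q by metis
    ultimately show "p \<in> block c k \<longleftrightarrow> q \<in> block c k" by simp
  qed
  ultimately show ?thesis unfolding young_def by simp
qed

lemma psum_etil:
  assumes "1 \<le> c (Suc a)"
  shows "psum (etil a c) i = psum c i + (if i = Suc a then 1 else 0)"
  using assms by (induction i) (auto simp: psum_Suc etil_def psum_def[of _ 0])

lemma psum_ftil:
  assumes "1 \<le> c a"
  shows "psum (ftil a c) i = psum c i - (if i = Suc a then 1 else 0)"
proof (induction i)
  case 0 then show ?case by (simp add: psum_def)
next
  case (Suc i)
  have "psum c (Suc a) \<ge> 1" using assms by (simp add: psum_Suc)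
  then show ?case using Suc assms by (auto simp: psum_Suc ftil_def)
qed

lemma etil_comp:
  assumes c: "c \<in> compositions n d" and a: "Suc a < n" and ca: "1 \<le> c (Suc a)"
  shows "etil a c \<in> compositions n d"
proof -
  have "psum (etil a c) n = d" using psum_etil[of c a n, OF ca] psum_comp[OF c] a by simp
  moreover have "\<forall>i\<ge>n. etil a c i = 0" using c a by (auto simp: compositions_def etil_def)
  ultimately show ?thesis by (simp add: compositions_def psum_def)
qed

lemma ftil_comp:
  assumes c: "c \<in> compositions n d" and a: "Suc a < n" and ca: "1 \<le> c a"
  shows "ftil a c \<in> compositions n d"
proof -
  have "psum (ftil a c) n = d" using psum_ftil[of c a n, OF ca] psum_comp[OF c] a by simp
  moreover have "\<forall>i\<ge>n. ftil a c i = 0" using c a by (auto simp: compositions_def ftil_def)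
  ultimately show ?thesis by (simp add: compositions_def psum_def)
qed

lemma theta_etil:
  assumes c: "c \<in> compositions n d" and a: "Suc a < n" and ca: "1 \<le> c (Suc a)"
  defines "p \<equiv> psum c (Suc a)"
  shows "p < d" "thetaw d c p = Suc a" "thetaw d (etil a c) = (thetaw d c)(p := a)"
proof -
  have ec: "etil a c \<in> compositions n d" by (rule etil_comp[OF c a ca])
  have "psum c (Suc (Suc a)) \<le> psum c n" using a by (intro psum_mono) simp
  then show pd: "p < d" using psum_comp[OF c] ca by (simp add: p_def psum_Suc[of c "Suc a"])
  show "thetaw d c p = Suc a" using pd ca by (intro theta_eq) (auto simp: p_def psum_Suc[of c "Suc a"])
  show "thetaw d (etil a c) = (thetaw d c)(p := a)"
  proof
    fix j
    show "thetaw d (etil a c) j = ((thetaw d c)(p := a)) j"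
    proof (cases "j < d")
      case False then show ?thesis using pd by (simp add: thetaw_def)
    next
      case True
      show ?thesis
      proof (cases "j = p")
        case True
        then show ?thesis using pd ca
          by (intro theta_eq) (auto simp: p_def psum_etil psum_Suc[of c a])
      next
        case False
        define i where "i = thetaw d c j"
        have h: "psum c i \<le> j" "j < psum c (Suc i)" using theta_ex[OF c \<open>j < d\<close>] by (auto simp: i_def)
        have "thetaw d (etil a c) j = i"
          using h False \<open>j < d\<close> by (intro theta_eq) (auto simp: psum_etil[of c a, OF ca] p_def)
        then show ?thesis using False by (simp add: i_def)
      qed
    qed
  qed
qed

lemma theta_ftil:
  assumes c: "c \<in> compositions n d" and a: "Suc a < n" and ca: "1 \<le> c a"
  defines "p \<equiv> psum c (Suc a) - 1"
  shows "p < d" "thetaw d c p = a" "thetaw d (ftil a c) = (thetaw d c)(p := Suc a)"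
proof -
  have p1: "psum c (Suc a) \<ge> 1" using ca by (simp add: psum_Suc)
  have "psum c (Suc a) \<le> psum c n" using a by (intro psum_mono) simp
  then show pd: "p < d" using psum_comp[OF c] p1 by (simp add: p_def)
  show "thetaw d c p = a" using pd ca p1 by (intro theta_eq) (auto simp: p_def psum_Suc[of c a])
  show "thetaw d (ftil a c) = (thetaw d c)(p := Suc a)"
  proof
    fix j
    show "thetaw d (ftil a c) j = ((thetaw d c)(p := Suc a)) j"
    proof (cases "j < d")
      case False then show ?thesis using pd by (simp add: thetaw_def)
    next
      case True
      show ?thesis
      proof (cases "j = p")
        case True
        have "psum c (Suc a) \<le> psum c (Suc (Suc a))" by (intro psum_mono) simp
        then show ?thesis using pd ca p1 True
          by (intro theta_eq) (auto simp: p_def psum_ftil)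
      next
        case False
        define i where "i = thetaw d c j"
        have h: "psum c i \<le> j" "j < psum c (Suc i)" using theta_ex[OF c \<open>j < d\<close>] by (auto simp: i_def)
        have "thetaw d (ftil a c) j = i"
          using h False \<open>j < d\<close> p1 by (intro theta_eq) (auto simp: psum_ftil[of c a, OF ca] p_def)
        then show ?thesis using False by (simp add: i_def)
      qed
    qed
  qed
qed

lemma finite_compositions: "finite (compositions n d)"
proof -
  have "compositions n d \<subseteq> {f. \<forall>x. (x \<in> {..<n} \<longrightarrow> f x \<in> {..d}) \<and> (x \<notin> {..<n} \<longrightarrow> f x = 0)}"
  proof (intro subsetI CollectI allI conjI impI)
    fix f x assume f: "f \<in> compositions n d" and x: "x \<in> {..<n}"
    have "f x \<le> (\<Sum>i<n. f i)" using x by (intro member_le_sum) auto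
    then show "f x \<in> {..d}" using f by (simp add: compositions_def)
  next
    fix f x assume f: "f \<in> compositions n d" and x: "x \<notin> {..<n}"
    then show "f x = 0" by (simp add: compositions_def)
  qed
  moreover have "finite {f. \<forall>x. (x \<in> {..<n} \<longrightarrow> f x \<in> {..d}) \<and> (x \<notin> {..<n} \<longrightarrow> (f::nat\<Rightarrow>nat) x = 0)}"
    by (intro finite_set_of_finite_funs) auto
  ultimately show ?thesis by (rule finite_subset)
qed

lemma Phi_c_zero: "Phi_c d rho c 0 = (\<lambda>u. 0)"
  unfolding Phi_c_def fun_eq_iff by (simp only: matrix_vector_mult_0_right) simp

lemma Phi_single:
  assumes c: "c \<in> compositions n d"
  shows "Phi n d rho (single c v) = Phi_c d rho c v"
proof
  fix u
  have "Phi n d rho (single c v) u = (\<Sum>c'\<in>compositions n d. if c' = c then Phi_c d rho c v u else 0)"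
    unfolding Phi_def single_def by (intro sum.cong) (auto simp: Phi_c_zero)
  also have "\<dots> = Phi_c d rho c v u" using c finite_compositions by (simp add: sum.delta')
  finally show "Phi n d rho (single c v) u = Phi_c d rho c v u" .
qed

lemma Phi_c_XS: "Phi_c d rho c v u = (1 / of_nat (card (Sym d))) *s XS d rho (thetaw d c) u v"
  unfolding Phi_c_def XS_def by simp

lemma XS_smult: "XS d rho th u (k *s v) = k *s XS d rho th u v"
  unfolding XS_def by (simp only: mv_smult) (rule sum_if_smult)

lemma XS_sum: "XS d rho th u (\<Sum>w\<in>W. f w) = (\<Sum>w\<in>W. XS d rho th u (f w))"
proof -
  have "XS d rho th u (\<Sum>w\<in>W. f w) = (\<Sum>x\<in>Sym d. \<Sum>w\<in>W. if th \<circ> inv x = u then rho x *v f w else 0)"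
    unfolding XS_def mv_sum by (intro sum.cong) auto
  also have "\<dots> = (\<Sum>w\<in>W. XS d rho th u (f w))" unfolding XS_def by (rule sum.swap)
  finally show ?thesis .
qed

lemma young_comp: "y \<in> young n d c \<Longrightarrow> w \<in> young n d c \<Longrightarrow> y \<circ> w \<in> young n d c"
proof -
  assume y: "y \<in> young n d c" and w: "w \<in> young n d c"
  have "(y \<circ> w) ` block c i = block c i" if "i < n" for i
    using y w that unfolding young_def image_comp[symmetric] by simp
  then show ?thesis using y w unfolding young_def by (simp add: permutes_compose)
qed

lemma young_inv: assumes y: "y \<in> young n d c" shows "inv y \<in> young n d c"
proof -
  have yp: "y permutes {..<d}" and yb: "\<forall>i<n. y ` block c i = block c i" using y by (auto simp: young_def)
  have "inv y ` block c i = block c i" if "i < n" for i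
    using image_inv_f_f[OF permutes_inj[OF yp], of "block c i"] yb that by simp
  then show ?thesis using permutes_inv[OF yp] by (simp add: young_def)
qed

lemma young_id: "id \<in> young n d c"
  unfolding young_def by (simp add: permutes_id)

lemma finite_young: "finite (young n d c)"
  using finite_Sym young_Sym by (metis finite_subset subsetI)

lemma card_young: "card (young n d c) \<noteq> 0"
  using finite_young young_id by (metis card_0_eq empty_iff)

lemma avg_inv:
  assumes rep: "is_Sd_rep d rho" and y: "y \<in> young n d c"
  shows "rho y *v (\<Sum>w\<in>young n d c. rho w *v v) = (\<Sum>w\<in>young n d c. rho w *v v)"
proof -
  have rp: "\<forall>x\<in>Sym d. \<forall>y\<in>Sym d. rho (x \<circ> y) = rho x ** rho y" using rep by (simp add: is_Sd_rep_def)
  have "rho y *v (\<Sum>w\<in>young n d c. rho w *v v) = (\<Sum>w\<in>young n d c. rho (y \<circ> w) *v v)"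
    unfolding mv_sum using rp y by (intro sum.cong) (auto simp: matrix_vector_mul_assoc young_Sym)
  also have "\<dots> = (\<Sum>w\<in>young n d c. rho w *v v)"
  proof (rule sum.reindex_bij_witness[where i="\<lambda>w. inv y \<circ> w" and j="\<lambda>w. y \<circ> w"])
    have ys: "y \<in> Sym d" using y by (rule young_Sym)
    fix w assume w: "w \<in> young n d c"
    show "inv y \<circ> (y \<circ> w) = w" using ys by (simp add: o_assoc Sym_inv_l)
    show "y \<circ> w \<in> young n d c" using y w by (rule young_comp)
    show "y \<circ> (inv y \<circ> w) = w" using ys by (simp add: o_assoc Sym_inv_r)
    show "inv y \<circ> w \<in> young n d c" using young_inv[OF y] w by (rule young_comp)
    show "rho (y \<circ> w) *v v = rho (y \<circ> w) *v v" ..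
  qed
  finally show ?thesis .
qed

lemma assemble:
  fixes rho :: "(nat \<Rightarrow> nat) \<Rightarrow> complex ^ 'm::finite ^ 'm"
  assumes rep: "is_Sd_rep d rho" and c: "c \<in> compositions n d" and c': "c' \<in> compositions n d"
    and v: "v \<in> invariants rho (young n d c)"
    and p: "p < d" and thp: "thetaw d c p = \<beta>" and bn: "\<beta> < n"
    and th': "thetaw d c' = (thetaw d c)(p := \<alpha>)"
  shows "(let u = of_nat (c \<beta>) *s ((1 / of_nat (card (young n d c'))) *s
                 (\<Sum>w\<in>young n d c'. rho w *v v))
       in u \<in> invariants rho (young n d c') \<and>
          (\<lambda>u. \<Sum>j\<in>{j. j < d \<and> u j = \<alpha>}. Phi n d rho (single c v) (u(j := \<beta>))) = Phi n d rho (single c' u))"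
proof -
  define M where "M = card (young n d c')"
  define S where "S = (\<Sum>w\<in>young n d c'. rho w *v v)"
  define u' where "u' = (of_nat (c \<beta>)::complex) *s ((1 / of_nat M) *s S)"
  have rp: "\<forall>x\<in>Sym d. \<forall>y\<in>Sym d. rho (x \<circ> y) = rho x ** rho y" using rep by (simp add: is_Sd_rep_def)
  have M0: "M \<noteq> 0" unfolding M_def by (rule card_young)
  have inv: "u' \<in> invariants rho (young n d c')"
    unfolding invariants_def u'_def S_def M_def
    using avg_inv[OF rep] by (simp add: mv_smult)
  have vinv: "\<forall>q<d. thetaw d c q = \<beta> \<longrightarrow> rho (Transposition.transpose p q) *v v = v"
  proof (intro allI impI)
    fix q assume q: "q < d" "thetaw d c q = \<beta>"
    have "Transposition.transpose p q \<in> young n d c"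
      using transp_young[OF c bn, of p q] theta_block[OF c] q p thp by blast
    then show "rho (Transposition.transpose p q) *v v = v" using v by (simp add: invariants_def)
  qed
  have eq: "(\<lambda>u. \<Sum>j\<in>{j. j < d \<and> u j = \<alpha>}. Phi n d rho (single c v) (u(j := \<beta>))) = Phi n d rho (single c' u')"
  proof
    fix u
    have "(\<Sum>j\<in>{j. j < d \<and> u j = \<alpha>}. Phi n d rho (single c v) (u(j := \<beta>)))
        = (1 / of_nat (card (Sym d))) *s (\<Sum>j\<in>{j. j < d \<and> u j = \<alpha>}. XS d rho (thetaw d c) (u(j := \<beta>)) v)"
      unfolding Phi_single[OF c] Phi_c_XS smult_sum ..
    also have "\<dots> = (1 / of_nat (card (Sym d))) *s ((of_nat (c \<beta>)::complex) *s XS d rho (thetaw d c') u v)"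
      unfolding core[OF rp p thp vinv] card_fiber[OF c bn] th' ..
    also have "\<dots> = (1 / of_nat (card (Sym d))) *s XS d rho (thetaw d c') u u'"
    proof -
      have "XS d rho (thetaw d c') u S = (\<Sum>w\<in>young n d c'. XS d rho (thetaw d c') u v)"
        unfolding S_def XS_sum
        using reindex_stab[OF rp young_Sym young_stab[OF c']] by simp
      also have "\<dots> = (of_nat M::complex) *s XS d rho (thetaw d c') u v"
        unfolding M_def by (rule sum_const_vec)
      finally have "XS d rho (thetaw d c') u u' = (of_nat (c \<beta>)::complex) *s XS d rho (thetaw d c') u v"
        unfolding u'_def XS_smult using M0 by (simp add: vector_smult_assoc)
      then show ?thesis by simp
    qed
    also have "\<dots> = Phi n d rho (single c' u') u"
      unfolding Phi_single[OF c'] Phi_c_XS ..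
    finally show "(\<Sum>j\<in>{j. j < d \<and> u j = \<alpha>}. Phi n d rho (single c v) (u(j := \<beta>))) = Phi n d rho (single c' u') u" .
  qed
  show ?thesis using inv eq unfolding Let_def u'_def S_def M_def by simp
qed

theorem mainTheorem3:
  fixes rho :: "(nat \<Rightarrow> nat) \<Rightarrow> complex ^ 'm::finite ^ 'm"
    and n d a :: nat and c :: "nat \<Rightarrow> nat" and v :: "complex ^ 'm"
  assumes "n \<ge> 1" and "d \<ge> 1"
    and rep: "is_Sd_rep d rho"
    and comp: "c \<in> compositions n d"
    and a: "Suc a < n"
    and v: "v \<in> invariants rho (young n d c)"
  shows "(Suc 0 \<le> c (Suc a) \<longrightarrow>
      (let u = of_nat (c (Suc a)) *s ((1 / of_nat (card (young n d (etil a c)))) *s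
                 (\<Sum>w\<in>young n d (etil a c). rho w *v v))
       in u \<in> invariants rho (young n d (etil a c)) \<and>
          Eop d a (Phi n d rho (single c v)) = Phi n d rho (single (etil a c) u))) \<and>
    (Suc 0 \<le> c a \<longrightarrow>
      (let u = of_nat (c a) *s ((1 / of_nat (card (young n d (ftil a c)))) *s
                 (\<Sum>w\<in>young n d (ftil a c). rho w *v v))
       in u \<in> invariants rho (young n d (ftil a c)) \<and>
          Fop d a (Phi n d rho (single c v)) = Phi n d rho (single (ftil a c) u)))"
proof (intro conjI impI)
  assume ca: "Suc 0 \<le> c (Suc a)"
  then have ca1: "1 \<le> c (Suc a)" by simp
  have E: "Eop d a T = (\<lambda>u. \<Sum>j\<in>{j. j < d \<and> u j = a}. T (u(j := Suc a)))" for T :: "'m tens"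
    unfolding Eop_def ..
  show "let u = of_nat (c (Suc a)) *s ((1 / of_nat (card (young n d (etil a c)))) *s
                 (\<Sum>w\<in>young n d (etil a c). rho w *v v))
       in u \<in> invariants rho (young n d (etil a c)) \<and>
          Eop d a (Phi n d rho (single c v)) = Phi n d rho (single (etil a c) u)"
    unfolding E
    by (rule assemble[OF rep comp etil_comp[OF comp a ca1] v theta_etil(1)[OF comp a ca1]
          theta_etil(2)[OF comp a ca1] a theta_etil(3)[OF comp a ca1]])
next
  assume ca: "Suc 0 \<le> c a"
  then have ca1: "1 \<le> c a" by simp
  have F: "Fop d a T = (\<lambda>u. \<Sum>j\<in>{j. j < d \<and> u j = Suc a}. T (u(j := a)))" for T :: "'m tens"
    unfolding Fop_def ..
  have an: "a < n" using a by simp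
  show "let u = of_nat (c a) *s ((1 / of_nat (card (young n d (ftil a c)))) *s
                 (\<Sum>w\<in>young n d (ftil a c). rho w *v v))
       in u \<in> invariants rho (young n d (ftil a c)) \<and>
          Fop d a (Phi n d rho (single c v)) = Phi n d rho (single (ftil a c) u)"
    unfolding F
    by (rule assemble[OF rep comp ftil_comp[OF comp a ca1] v theta_ftil(1)[OF comp a ca1]
          theta_ftil(2)[OF comp a ca1] an theta_ftil(3)[OF comp a ca1]])
qed

end
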